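(* Let $G$ be a connected finite simple graph with $n$ vertices and diameter at most $2$. Then for every $R$-weighted complete graph $X$ with $n$ vertices, $|s(\{I(G)\}*\{X\})|=1$ if and only if $|s(\{\rho(G)\}*\{X\})|=1$; that is, $I(G)^{\perp}=\rho(G)^{\perp}$.
   Context: Fix a commutative ring $R$. An $R$-weighted complete graph $K$ is a finite vertex set with a weight $v_K(e)\in R$ on every 2-subset $e$. For such $H,G'$ with equal vertex counts and a bijection $f:V(H)\to V(G')$, $H*_fG'$ has vertex set $V(H)$ and weights $v_H(\{x,y\})v_{G'}(\{f(x),f(y)\})$; $H*G'=\{H*_fG': f \text{ bijection}\}$. $s(K)=\sum_e v_K(e)$, $s(\mathscr K)=\{s(K):K\in\mathscr K\}$. For a weighted complete graph $H$, $H^{\perp}$ is the class of $R$-weighted complete graphs $X$ with $|V(X)|=|V(H)|$ and $|s(H*X)|=1$. For a simple graph $G$, $I(G)$ has weight $1$ on edges and $0$ on non-edges; for connected $G$, $\rho(G)$ has weight $\rho_G(x,y)$ (graph distance) on $\{x,y\}$. *)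

theory Defs
  imports Main
begin

text \<open>An R-weighted complete graph: a finite vertex set V together with a weight
  function on 2-subsets of V (values of w on other sets are irrelevant).\<close>
type_synonym ('a, 'r) wcg = "'a set \<times> ('a set \<Rightarrow> 'r)"

definition two_subsets :: "'a set \<Rightarrow> 'a set set" where
  "two_subsets V = {e. e \<subseteq> V \<and> card e = 2}"

definition is_wcg :: "('a, 'r) wcg \<Rightarrow> bool" where
  "is_wcg K \<longleftrightarrow> finite (fst K)"

definition wsum :: "('a, 'r::comm_ring_1) wcg \<Rightarrow> 'r" where
  "wsum K = (\<Sum>e\<in>two_subsets (fst K). snd K e)"

definition wprod_f :: "('a, 'r::comm_ring_1) wcg \<Rightarrow> ('b, 'r) wcg \<Rightarrow> ('a \<Rightarrow> 'b) \<Rightarrow> ('a, 'r) wcg" where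
  "wprod_f H G f = (fst H, \<lambda>e. snd H e * snd G (f ` e))"

definition wprod :: "('a, 'r::comm_ring_1) wcg \<Rightarrow> ('b, 'r) wcg \<Rightarrow> ('a, 'r) wcg set" where
  "wprod H G = {wprod_f H G f | f. bij_betw f (fst H) (fst G)}"

definition perp :: "('a, 'r::comm_ring_1) wcg \<Rightarrow> ('b, 'r) wcg set" where
  "perp H = {X. is_wcg X \<and> card (fst X) = card (fst H) \<and> card (wsum ` wprod H X) = 1}"

definition simple_graph :: "'a set \<Rightarrow> ('a \<Rightarrow> 'a \<Rightarrow> bool) \<Rightarrow> bool" where
  "simple_graph V E \<longleftrightarrow> finite V \<and> (\<forall>x y. E x y \<longrightarrow> x \<in> V \<and> y \<in> V)
     \<and> (\<forall>x y. E x y \<longrightarrow> E y x) \<and> (\<forall>x. \<not> E x x)"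

definition has_walk :: "('a \<Rightarrow> 'a \<Rightarrow> bool) \<Rightarrow> 'a \<Rightarrow> 'a \<Rightarrow> nat \<Rightarrow> bool" where
  "has_walk E x y n \<longleftrightarrow> (\<exists>p :: nat \<Rightarrow> 'a. p 0 = x \<and> p n = y \<and> (\<forall>i<n. E (p i) (p (Suc i))))"

definition connected_graph :: "'a set \<Rightarrow> ('a \<Rightarrow> 'a \<Rightarrow> bool) \<Rightarrow> bool" where
  "connected_graph V E \<longleftrightarrow> (\<forall>x\<in>V. \<forall>y\<in>V. \<exists>n. has_walk E x y n)"

definition gdist :: "('a \<Rightarrow> 'a \<Rightarrow> bool) \<Rightarrow> 'a \<Rightarrow> 'a \<Rightarrow> nat" where
  "gdist E x y = (LEAST n. has_walk E x y n)"

definition diam_le :: "'a set \<Rightarrow> ('a \<Rightarrow> 'a \<Rightarrow> bool) \<Rightarrow> nat \<Rightarrow> bool" where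
  "diam_le V E d \<longleftrightarrow> (\<forall>x\<in>V. \<forall>y\<in>V. gdist E x y \<le> d)"

definition I_graph :: "'a set \<Rightarrow> ('a \<Rightarrow> 'a \<Rightarrow> bool) \<Rightarrow> ('a, 'r::comm_ring_1) wcg" where
  "I_graph V E = (V, \<lambda>e. if (\<exists>x y. e = {x, y} \<and> E x y) then 1 else 0)"

definition rho_graph :: "'a set \<Rightarrow> ('a \<Rightarrow> 'a \<Rightarrow> bool) \<Rightarrow> ('a, 'r::comm_ring_1) wcg" where
  "rho_graph V E = (V, \<lambda>e. if (\<exists>x y. e = {x, y} \<and> x \<noteq> y)
      then (case (SOME (x, y). e = {x, y} \<and> x \<noteq> y) of (x, y) \<Rightarrow> of_nat (gdist E x y)) else 0)"

end

theory Submission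
  imports Defs
begin

lemma walk0: "has_walk E x y 0 \<longleftrightarrow> x = y"
  unfolding has_walk_def by auto

lemma walk1: "has_walk E x y 1 \<longleftrightarrow> E x y"
proof
  assume "has_walk E x y 1" then show "E x y" unfolding has_walk_def by auto
next
  assume "E x y"
  then show "has_walk E x y 1" unfolding has_walk_def
    by (rule_tac x="\<lambda>i. if i = 0 then x else y" in exI) auto
qed

lemma gdist_val:
  assumes "connected_graph V E" "diam_le V E 2" "x \<in> V" "y \<in> V" "x \<noteq> y"
  shows "gdist E x y = (if E x y then 1 else 2)"
proof -
  have ex: "\<exists>n. has_walk E x y n" using assms(1,3,4) unfolding connected_graph_def by auto
  have hw: "has_walk E x y (gdist E x y)" unfolding gdist_def using ex by (rule LeastI_ex)
  have le: "gdist E x y \<le> 2" using assms(2,3,4) unfolding diam_le_def by auto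
  have n0: "gdist E x y \<noteq> 0" using hw walk0 assms(5) by metis
  show ?thesis
  proof (cases "E x y")
    case True
    have "gdist E x y \<le> 1" unfolding gdist_def using True walk1 by (metis Least_le)
    then show ?thesis using n0 True by auto
  next
    case False
    have "gdist E x y \<noteq> 1" using hw walk1 False by metis
    then show ?thesis using n0 le False by auto
  qed
qed

lemma rho_weight:
  assumes sg: "simple_graph V E" and c: "connected_graph V E" and d: "diam_le V E 2"
    and e: "e \<in> two_subsets V"
  shows "snd (rho_graph V E :: ('a, 'r::comm_ring_1) wcg) e
         = 2 - snd (I_graph V E :: ('a, 'r) wcg) e"
proof -
  from e have eV: "e \<subseteq> V" and "card e = 2" unfolding two_subsets_def by auto
  then obtain x y where xy: "e = {x, y}" "x \<noteq> y" by (auto simp: card_2_iff)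
  define p where "p = (SOME (x, y). e = {x, y} \<and> x \<noteq> y)"
  have "\<exists>q. (case q of (x, y) \<Rightarrow> e = {x, y} \<and> x \<noteq> y)" using xy by auto
  then have "case p of (x, y) \<Rightarrow> e = {x, y} \<and> x \<noteq> y" unfolding p_def by (rule someI_ex)
  then obtain a b where p: "p = (a, b)" "e = {a, b}" "a \<noteq> b" by (cases p) auto
  have ab: "a \<in> V" "b \<in> V" using p eV by auto
  have sym: "\<And>u v. E u v \<Longrightarrow> E v u" using sg unfolding simple_graph_def by auto
  have iff: "(\<exists>x y. e = {x, y} \<and> E x y) \<longleftrightarrow> E a b"
  proof
    assume "\<exists>x y. e = {x, y} \<and> E x y"
    then obtain u v where "e = {u, v}" "E u v" by auto
    then have "(u = a \<and> v = b) \<or> (u = b \<and> v = a)" using p by (auto simp: doubleton_eq_iff)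
    then show "E a b" using \<open>E u v\<close> sym by auto
  qed (use p in auto)
  have g: "gdist E a b = (if E a b then 1 else 2)" using gdist_val[OF c d ab p(3)] .
  have ex: "\<exists>x y. e = {x, y} \<and> x \<noteq> y" using xy by blast
  have r: "snd (rho_graph V E :: ('a, 'r) wcg) e = of_nat (gdist E a b)"
    unfolding rho_graph_def snd_conv p_def[symmetric] using ex p(1) by simp
  have i: "snd (I_graph V E :: ('a, 'r) wcg) e = (if E a b then 1 else 0)"
    unfolding I_graph_def snd_conv using iff by simp
  show ?thesis using r i g by simp
qed

lemma sum_image_f:
  fixes X :: "('b, 'r::comm_ring_1) wcg"
  assumes "bij_betw f V (fst X)"
  shows "(\<Sum>e\<in>two_subsets V. snd X (f ` e)) = wsum X"
proof -
  have inj: "inj_on f V" using assms bij_betw_def by auto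
  have inj2: "inj_on ((`) f) (two_subsets V)"
    unfolding inj_on_def two_subsets_def using inj
    by (metis inj_on_image_eq_iff mem_Collect_eq)
  have img: "(`) f ` two_subsets V = two_subsets (fst X)"
  proof
    show "(`) f ` two_subsets V \<subseteq> two_subsets (fst X)"
      unfolding two_subsets_def using assms inj
      by (auto simp: bij_betw_def card_image inj_on_subset)
    show "two_subsets (fst X) \<subseteq> (`) f ` two_subsets V"
    proof
      fix e assume "e \<in> two_subsets (fst X)"
      then have e: "e \<subseteq> fst X" "card e = 2" unfolding two_subsets_def by auto
      define e' where "e' = inv_into V f ` e"
      have "e' \<subseteq> V" using e assms unfolding e'_def
        by (auto simp: bij_betw_def inv_into_into)
      moreover have "f ` e' = e" using e assms unfolding e'_def
        by (auto simp: bij_betw_def image_inv_into_cancel)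
      moreover have "card e' = 2"
        using \<open>e' \<subseteq> V\<close> \<open>f ` e' = e\<close> e inj card_image inj_on_subset by metis
      ultimately show "e \<in> (`) f ` two_subsets V" unfolding two_subsets_def by auto
    qed
  qed
  show ?thesis unfolding wsum_def
    using sum.reindex[OF inj2, of "snd X"] img by (simp add: comp_def)
qed

lemma fst_graphs: "fst (rho_graph V E) = V" "fst (I_graph V E) = V"
  by (simp_all add: rho_graph_def I_graph_def)

theorem mainTheorem18:
  fixes V :: "'a set" and E :: "'a \<Rightarrow> 'a \<Rightarrow> bool"
  assumes "simple_graph V E" and "connected_graph V E" and "diam_le V E 2"
  shows "(perp (I_graph V E :: ('a, 'r::comm_ring_1) wcg) :: ('b, 'r) wcg set)
       = perp (rho_graph V E :: ('a, 'r) wcg)"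
proof -
  let ?I = "I_graph V E :: ('a, 'r) wcg"
  let ?R = "rho_graph V E :: ('a, 'r) wcg"
  have key: "wsum ` wprod ?R X = (\<lambda>t. 2 * wsum X - t) ` (wsum ` wprod ?I X)"
    for X :: "('b, 'r) wcg"
  proof -
    have eq: "wsum (wprod_f ?R X f) = 2 * wsum X - wsum (wprod_f ?I X f)"
      if f: "bij_betw f V (fst X)" for f
    proof -
      have "wsum (wprod_f ?R X f) = (\<Sum>e\<in>two_subsets V. snd ?R e * snd X (f ` e))"
        by (simp add: wsum_def wprod_f_def fst_graphs)
      also have "\<dots> = (\<Sum>e\<in>two_subsets V. (2 - snd ?I e) * snd X (f ` e))"
        by (rule sum.cong) (simp_all add: rho_weight[OF assms])
      also have "\<dots> = 2 * (\<Sum>e\<in>two_subsets V. snd X (f ` e))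
          - (\<Sum>e\<in>two_subsets V. snd ?I e * snd X (f ` e))"
        by (simp add: algebra_simps sum_subtractf sum_distrib_left)
      also have "\<dots> = 2 * wsum X - wsum (wprod_f ?I X f)"
        using sum_image_f[OF f] by (simp add: wsum_def wprod_f_def fst_graphs)
      finally show ?thesis .
    qed
    show ?thesis
    proof
      show "wsum ` wprod ?R X \<subseteq> (\<lambda>t. 2 * wsum X - t) ` (wsum ` wprod ?I X)"
      proof
        fix t assume "t \<in> wsum ` wprod ?R X"
        then obtain f where f: "bij_betw f V (fst X)" "t = wsum (wprod_f ?R X f)"
          unfolding wprod_def by (auto simp: fst_graphs)
        then have "wprod_f ?I X f \<in> wprod ?I X" unfolding wprod_def by (auto simp: fst_graphs)
        then show "t \<in> (\<lambda>t. 2 * wsum X - t) ` (wsum ` wprod ?I X)"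
          using f eq by blast
      qed
      show "(\<lambda>t. 2 * wsum X - t) ` (wsum ` wprod ?I X) \<subseteq> wsum ` wprod ?R X"
      proof
        fix t assume "t \<in> (\<lambda>t. 2 * wsum X - t) ` (wsum ` wprod ?I X)"
        then obtain f where f: "bij_betw f V (fst X)" "t = 2 * wsum X - wsum (wprod_f ?I X f)"
          unfolding wprod_def by (auto simp: fst_graphs)
        then have "wprod_f ?R X f \<in> wprod ?R X" unfolding wprod_def by (auto simp: fst_graphs)
        then show "t \<in> wsum ` wprod ?R X"
          using f eq by (metis image_eqI)
      qed
    qed
  qed
  have inj: "inj_on (\<lambda>t::'r. 2 * c - t) A" for c :: 'r and A by (rule inj_onI) simp
  show ?thesis
    unfolding perp_def using key card_image[OF inj]
    by (simp add: fst_graphs)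
qed

end
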